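(* Let $L\ge1$ be an integer and $g$ a real polynomial of degree at most $L$ with $g(0)=g'(0)=0$. Let $a<0<b$ and suppose $|g(x)|\le|x|$ for all $x\in[a,b]$. Then \[ |g(x)|\le \frac{8L^2}{b-a}x^2\quad\text{for all } x\in[a/4,b/4]\text{ with } |x|\le\frac{3(b-a)}{L^2}, \] and \[ |g(x)|\le \frac{4L}{\sqrt{|ab|}}x^2\quad\text{for all } x\in[a/4,b/4]\text{ with } |x|\le\frac{\sqrt{|ab|}}{4L}. \] *)

theory Defs
  imports "HOL-Computational_Algebra.Polynomial" Complex_Main
begin

end

theory Submission
  imports Defs "HOL-Complex_Analysis.Complex_Analysis"
begin
lemma poly_sum_N:
  fixes p :: "complex poly"
  assumes "degree p \<le> N"
  shows "poly p y = (\<Sum>i\<le>N. coeff p i * y^i)"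
proof -
  have "poly p y = (\<Sum>i\<le>degree p. coeff p i * y^i)" by (rule poly_altdef)
  also have "\<dots> = (\<Sum>i\<le>N. coeff p i * y^i)"
    by (rule sum.mono_neutral_left) (use assms in \<open>auto simp: coeff_eq_0\<close>)
  finally show ?thesis .
qed

lemma joukowski_bound:
  fixes p :: "complex poly" and a b :: real and w :: complex
  assumes ab: "a < b" and deg: "degree p \<le> N"
    and bnd: "\<forall>t\<in>{a..b}. cmod (poly p (of_real t)) \<le> 1"
    and w0: "w \<noteq> 0" and w1: "cmod w \<le> 1"
  shows "cmod (poly p (of_real ((a+b)/2) + of_real ((b-a)/2) * (w + 1/w) / 2)) \<le> (1 / cmod w) ^ N"
proof -
  define Mc where "Mc = complex_of_real ((a+b)/2)"
  define Cc where "Cc = complex_of_real ((b-a)/2)"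
  define F where "F = (\<lambda>u. \<Sum>i\<le>N. coeff p i * (Mc* u + Cc*(u^2+1)/2)^i * u^(N-i))"
  have Feq: "F u = u^N * poly p (Mc + Cc*(u + 1/u)/2)" if "u \<noteq> 0" for u
  proof -
    have vy: "u * (Mc + Cc*(u + 1/u)/2) = Mc* u + Cc*(u^2+1)/2"
      using that by (simp add: field_simps power2_eq_square)
    have "u^N * poly p (Mc + Cc*(u + 1/u)/2) = (\<Sum>i\<le>N. u^N * (coeff p i * (Mc + Cc*(u + 1/u)/2)^i))"
      by (simp add: poly_sum_N[OF deg] sum_distrib_left)
    also have "\<dots> = F u"
      unfolding F_def
    proof (rule sum.cong)
      fix i assume "i \<in> {..N}"
      then have "u^N = u^i * u^(N-i)" by (simp add: power_add[symmetric])
      then show "u^N * (coeff p i * (Mc + Cc*(u + 1/u)/2)^i) = coeff p i * (Mc* u + Cc*(u^2+1)/2)^i * u^(N-i)"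
        by (simp add: vy[symmetric] power_mult_distrib)
    qed simp
    finally show ?thesis by simp
  qed
  have hol: "F holomorphic_on ball 0 1" unfolding F_def by (intro holomorphic_intros) auto
  have cont: "continuous_on (cball 0 1) F" unfolding F_def by (intro continuous_intros) auto
  have fr: "cmod (F u) \<le> 1" if "u \<in> frontier (cball 0 1)" for u
  proof -
    from that have nv: "cmod u = 1" by simp
    then have v0: "u \<noteq> 0" by auto
    have "u * cnj u = 1"
      using nv by (metis complex_norm_square mult.commute of_real_1 power_one)
    then have iv: "1 / u = cnj u" using v0 by (simp add: field_simps)
    have arg: "Mc + Cc*(u + 1/u)/2 = of_real ((a+b)/2 + (b-a)/2 * Re u)"
      unfolding iv Mc_def Cc_def complex_add_cnj by simp
    have "\<bar>Re u\<bar> \<le> 1" using abs_Re_le_cmod[of u] nv by simp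
    then have r: "-1 \<le> Re u" "Re u \<le> 1" by auto
    have x1: "(b-a)/2 * Re u \<ge> (b-a)/2 * (-1)" and x2: "(b-a)/2 * Re u \<le> (b-a)/2 * 1"
    using ab r by (intro mult_left_mono; simp)+
  define X where "X = (b-a)/2 * Re u"
  have X1: "X \<ge> -((b-a)/2)" and X2: "X \<le> (b-a)/2" using x1 x2 unfolding X_def by simp_all
  have "a \<le> (a+b)/2 + X" using X1 by (simp add: field_simps)
  moreover have "(a+b)/2 + X \<le> b" using X2 by (simp add: field_simps)
  ultimately have "(a+b)/2 + X \<in> {a..b}" by simp
  then have "(a+b)/2 + (b-a)/2 * Re u \<in> {a..b}" by (simp add: X_def)
    then have "cmod (poly p (complex_of_real ((a+b)/2 + (b-a)/2 * Re u))) \<le> 1" using bnd by blast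
    then have "cmod (poly p (Mc + Cc*(u + 1/u)/2)) \<le> 1" by (simp only: arg)
    then show ?thesis using Feq[OF v0] nv by (simp add: norm_mult norm_power)
  qed
  have "cmod (F w) \<le> 1"
    by (rule maximum_modulus_frontier[of F "cball 0 1"]) (use hol cont fr w1 in auto)
  then have "cmod w ^ N * cmod (poly p (Mc + Cc*(w + 1/w)/2)) \<le> 1"
    using Feq[OF w0] by (simp add: norm_mult norm_power)
  moreover have "cmod w > 0" using w0 by simp
  ultimately have "cmod (poly p (Mc + Cc*(w + 1/w)/2)) \<le> 1 / cmod w ^ N"
    by (simp add: field_simps mult.commute)
  then show ?thesis unfolding Mc_def Cc_def by (simp add: power_one_over)
qed


lemma root_exists:
  fixes a b :: real and z :: complex
  assumes ab: "a < b"
  shows "\<exists>w. w \<noteq> 0 \<and> cmod w \<le> 1 \<and> z = of_real ((a+b)/2) + of_real ((b-a)/2) * (w + 1/w) / 2"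
proof -
  define Mc where "Mc = complex_of_real ((a+b)/2)"
  define Cc where "Cc = complex_of_real ((b-a)/2)"
  have C0: "Cc \<noteq> 0" using ab by (simp add: Cc_def)
  define uu where "uu = (z - Mc) / Cc"
  define r where "r = csqrt (uu^2 - 1)"
  define w1 where "w1 = uu - r"
  define w2 where "w2 = uu + r"
  have prod: "w1 * w2 = 1"
    unfolding w1_def w2_def r_def by (simp add: algebra_simps power2_eq_square[symmetric])
  then have nz: "w1 \<noteq> 0" "w2 \<noteq> 0" by auto
  have i1: "1 / w1 = w2" "1 / w2 = w1" using prod nz by (auto simp: field_simps)
  have zeq: "z = Mc + Cc * (2*uu) / 2" unfolding uu_def using C0 by (simp add: field_simps)
  have s: "w1 + w2 = 2*uu" unfolding w1_def w2_def by simp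
  have "cmod w1 * cmod w2 = 1" using prod by (metis norm_mult norm_one)
  have "cmod w1 \<le> 1 \<or> cmod w2 \<le> 1"
  proof (rule ccontr)
    assume "\<not> (cmod w1 \<le> 1 \<or> cmod w2 \<le> 1)"
    then have "1 * 1 < cmod w1 * cmod w2" by (intro mult_strict_mono) auto
    then show False using \<open>cmod w1 * cmod w2 = 1\<close> by simp
  qed
  then show ?thesis
  proof
    assume "cmod w1 \<le> 1" then show ?thesis
      using nz i1 s zeq by (intro exI[of _ w1]) (auto simp: Mc_def Cc_def)
  next
    assume "cmod w2 \<le> 1" then show ?thesis
      using nz i1 s zeq by (intro exI[of _ w2]) (auto simp: Mc_def Cc_def add.commute)
  qed
qed

lemma focal:
  fixes a b :: real and w :: complex
  assumes ab: "a < b" and w0: "w \<noteq> 0"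
    and z: "z = of_real ((a+b)/2) + of_real ((b-a)/2) * (w + 1/w) / 2"
  shows "cmod (z - of_real a) + cmod (z - of_real b) = (b-a)/2 * (cmod w + 1 / cmod w)"
proof -
  have e1: "z - of_real a = of_real ((b-a)/2) * (w+1)^2 / (2*w)"
    using w0 unfolding z by (simp add: field_simps power2_eq_square; simp add: algebra_simps)
  have e2: "z - of_real b = of_real ((b-a)/2) * (w-1)^2 / (2*w)"
    using w0 unfolding z by (simp add: field_simps power2_eq_square; simp add: algebra_simps)
  have par: "cmod (w+1)^2 + cmod (w-1)^2 = 2 * cmod w ^2 + 2"
    unfolding cmod_power2 by (simp add: power2_eq_square algebra_simps)
  have pos: "cmod w > 0" using w0 by simp
  have nba: "cmod (complex_of_real b - complex_of_real a) = \<bar>b - a\<bar>"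
    by (metis norm_of_real of_real_diff)
  have "cmod (z - of_real a) + cmod (z - of_real b)
      = \<bar>(b-a)/2\<bar> * (cmod (w+1)^2 + cmod (w-1)^2) / (2 * cmod w)"
    unfolding e1 e2 by (simp add: norm_mult norm_divide norm_power add_divide_distrib distrib_left nba)
  also have "\<dots> = \<bar>(b-a)/2\<bar> * (cmod w + 1 / cmod w)"
    unfolding par using pos by (simp add: field_simps power2_eq_square)
  finally show ?thesis using ab by simp
qed


lemma ellipse_bound:
  fixes p :: "complex poly" and a b s :: real and z :: complex
  assumes ab: "a < b" and deg: "degree p \<le> N"
    and bnd: "\<forall>t\<in>{a..b}. cmod (poly p (of_real t)) \<le> 1"
    and s1: "s \<ge> 1"
    and S: "cmod (z - of_real a) + cmod (z - of_real b) \<le> (b-a)/2 * (s + 1/s)"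
  shows "cmod (poly p z) \<le> s^N"
proof -
  obtain w where w0: "w \<noteq> 0" and w1: "cmod w \<le> 1"
    and zw: "z = of_real ((a+b)/2) + of_real ((b-a)/2) * (w + 1/w) / 2"
    using root_exists[OF ab] by blast
  have "(b-a)/2 * (cmod w + 1 / cmod w) \<le> (b-a)/2 * (s + 1/s)"
    using focal[OF ab w0 zw] S by simp
  then have le: "cmod w + 1 / cmod w \<le> s + 1/s" using ab by simp
  define \<sigma> where "\<sigma> = 1 / cmod w"
  have cpos: "cmod w > 0" using w0 by simp
  have s1': "\<sigma> \<ge> 1" unfolding \<sigma>_def using w1 cpos by simp
  have le2: "\<sigma> + 1/\<sigma> \<le> s + 1/s" using le cpos unfolding \<sigma>_def by simp
  have "\<sigma> \<le> s"
  proof (rule ccontr)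
    assume "\<not> \<sigma> \<le> s"
    then have gt: "\<sigma> > s" by simp
    have eq: "\<sigma> + 1/\<sigma> - (s + 1/s) = (\<sigma> - s) * (\<sigma> * s - 1) / (\<sigma> * s)"
      using s1 s1' by (simp add: field_simps)
    have "\<sigma> * 1 \<le> \<sigma> * s" using s1 s1' by (intro mult_left_mono) auto
    then have "\<sigma> * s > 1" using gt s1 by linarith
    then have "(\<sigma> - s) * (\<sigma> * s - 1) / (\<sigma> * s) > 0" using gt s1 s1' by simp
    then show False using eq le2 by linarith
  qed
  have "cmod (poly p z) \<le> (1 / cmod w)^N"
    unfolding zw by (rule joukowski_bound[OF ab deg bnd w0 w1])
  also have "\<dots> \<le> s^N" using \<open>\<sigma> \<le> s\<close> s1' unfolding \<sigma>_def by (intro power_mono) auto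
  finally show ?thesis .
qed

lemma dist_sq:
  fixes z :: complex and A :: real
  assumes A: "A > 0"
  shows "cmod (z + of_real A) \<le> A + Re z + (cmod z)^2 / (2*A)"
proof (rule power2_le_imp_le)
  define X where "X = Re z"
  define Y where "Y = Im z"
  have q: "(cmod z)^2 = X^2 + Y^2" unfolding X_def Y_def by (simp add: cmod_power2)
  have l: "(cmod (z + of_real A))^2 = (X + A)^2 + Y^2" unfolding X_def Y_def by (simp add: cmod_power2)
  have id: "(A + X + (X^2+Y^2)/(2*A))^2 - ((X + A)^2 + Y^2) = (X + (X^2+Y^2)/(2*A))^2"
    using A by (simp add: field_simps power2_eq_square; simp add: algebra_simps)
  show "(cmod (z + of_real A))^2 \<le> (A + Re z + (cmod z)^2 / (2*A))^2"
    unfolding l q X_def[symmetric] using id by (smt (verit) zero_le_power2)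
  have id2: "A + X + (X^2+Y^2)/(2*A) = (X + A)^2/(2*A) + A/2 + Y^2/(2*A)"
    using A by (simp add: field_simps power2_eq_square; simp add: algebra_simps)
  have "(X + A)^2/(2*A) \<ge> 0" "Y^2/(2*A) \<ge> 0" using A by simp_all
  then show "0 \<le> A + Re z + (cmod z)^2 / (2*A)"
    unfolding q X_def[symmetric] id2 using A by simp
qed

lemma dist_sq_a:
  fixes z :: complex and a :: real
  assumes "a < 0"
  shows "cmod (z - of_real a) \<le> Re z - a + (cmod z)^2 / (2*(-a))"
  using dist_sq[of "-a" z] assms by simp

lemma dist_sq_b:
  fixes z :: complex and b :: real
  assumes "b > 0"
  shows "cmod (z - of_real b) \<le> b - Re z + (cmod z)^2 / (2*b)"
proof -
  have "cmod (-z + of_real b) \<le> b + Re (-z) + (cmod (-z))^2 / (2*b)"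
    by (rule dist_sq[OF assms])
  moreover have "cmod (-z + of_real b) = cmod (z - of_real b)"
    by (metis minus_diff_eq norm_minus_cancel uminus_add_conv_diff)
  ultimately show ?thesis by simp
qed

lemma dist_lin_a:
  fixes z :: complex and a :: real
  assumes "a \<le> 0"
  shows "cmod (z - of_real a) \<le> Re z - a + 2 * cmod z"
proof -
  have "cmod (z - of_real a) \<le> cmod z + cmod (of_real a :: complex)" by (rule norm_triangle_ineq4)
  moreover have "- Re z \<le> cmod z" using abs_Re_le_cmod[of z] by linarith
  ultimately show ?thesis using assms by simp
qed

lemma dist_lin_b:
  fixes z :: complex and b :: real
  assumes "b \<ge> 0"
  shows "cmod (z - of_real b) \<le> b - Re z + 2 * cmod z"
proof -
  have "cmod (z - of_real b) \<le> cmod z + cmod (of_real b :: complex)" by (rule norm_triangle_ineq4)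
  moreover have "Re z \<le> cmod z" using abs_Re_le_cmod[of z] by linarith
  ultimately show ?thesis using assms by simp
qed

lemma disc_bound:
  fixes hC kC :: "complex poly" and R B :: real
  assumes R: "R > 0" and hk: "\<And>z::complex. poly hC z = z * poly kC z"
    and sph: "\<And>z::complex. cmod z = R \<Longrightarrow> cmod (poly hC z) \<le> B"
    and x: "cmod x \<le> R"
  shows "cmod (poly kC x) \<le> B / R"
proof (rule maximum_modulus_frontier[of "poly kC" "cball 0 R"])
  show "poly kC holomorphic_on interior (cball 0 R)"
    by (simp add: poly_altdef; intro holomorphic_intros)
  show "continuous_on (closure (cball 0 R)) (poly kC)"
    by (simp add: poly_altdef; intro continuous_intros)
  show "bounded (cball (0::complex) R)" by simp
  show "x \<in> cball 0 R" using x by simp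
  fix z :: complex assume "z \<in> frontier (cball 0 R)"
  then have zR: "cmod z = R" using R by simp
  then have "R * cmod (poly kC z) \<le> B" using sph[OF zR] hk[of z] by (simp add: norm_mult)
  then show "cmod (poly kC z) \<le> B / R" using R by (simp add: field_simps mult.commute)
qed

lemma exp2_le8: "exp (2::real) \<le> 8"
proof -
  have c: "(1 + 1/16 + (1/16)^2 :: real) = 273/256" by (simp add: power2_eq_square)
  have "exp (1/16::real) \<le> 1 + 1/16 + (1/16)^2" by (rule exp_bound) auto
  then have b: "exp (1/16::real) \<le> 273/256" unfolding c .
  have "exp (2::real) = exp (1/16) ^ 32" using exp_of_nat_mult[of 32 "1/16::real"] by simp
  also have "\<dots> \<le> (273/256) ^ 32" using b by (intro power_mono) auto
  also have "\<dots> \<le> 8" by (simp add: power_divide divide_le_eq)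
  finally show ?thesis .
qed

lemma pow_exp_bound:
  fixes c :: real and N :: nat
  assumes "N \<ge> 1" "c \<ge> 0"
  shows "(1 + c / N) ^ N \<le> exp c"
proof -
  have "(1 + c/N)^N \<le> exp (c/N) ^ N" using assms by (intro power_mono exp_ge_add_one_self) auto
  also have "\<dots> = exp (of_nat N * (c/N))" by (rule exp_of_nat_mult[symmetric])
  also have "\<dots> = exp c" using assms by simp
  finally show ?thesis .
qed

lemma onepe:
  fixes e :: real assumes "e > 0"
  shows "(1+e) + 1/(1+e) = 2 + e^2/(1+e)"
proof -
  have "1 + e \<noteq> 0" using assms by simp
  then show ?thesis by (simp add: field_simps power2_eq_square)
qed

lemma ineq1:
  fixes a :: real assumes a: "a \<ge> 1"
  shows "2 + 4/(a+1)^2 + 2/(a+1)^4 \<le> (1 + 2/a) + 1/(1 + 2/a)"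
proof -
  have e: "(2/a)^2/(1 + 2/a) = 4/(a*(a+2))" using a by (simp add: field_simps power2_eq_square)
  have gen: "4/x^2 + 2/x^4 = (4*x^2 + 2)/x^4" if "x > 0" for x :: real
    using that by (simp add: field_simps power2_eq_square power4_eq_xxxx)
  have lhs: "4/(a+1)^2 + 2/(a+1)^4 = (4*(a+1)^2 + 2)/(a+1)^4"
    using a by (intro gen) simp
  have "(4*(a+1)^2 + 2) * (a*(a+2)) \<le> 4 * (a+1)^4"
    using a by (simp add: algebra_simps power2_eq_square power4_eq_xxxx)
  moreover have fr: "x/y \<le> w/z" if "x*z \<le> w*y" "y>0" "z>0" for x y w z :: real
    using that by (simp add: field_simps)
  ultimately have "(4*(a+1)^2 + 2)/(a+1)^4 \<le> 4/(a*(a+2))"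
    using a by (intro fr) auto
  then show ?thesis using onepe[of "2/a"] a e lhs by simp
qed

lemma ineq2:
  fixes a :: real assumes a: "a \<ge> 1"
  shows "2 + 1/(4*(a+1)^2) \<le> (1 + 1/(2*a)) + 1/(1 + 1/(2*a))"
proof -
  have e: "(1/(2*a))^2/(1 + 1/(2*a)) = 1/(2*a*(2*a+1))" using a by (simp add: field_simps power2_eq_square)
  have "2*a*(2*a+1) \<le> 4*(a+1)^2" using a by (simp add: algebra_simps power2_eq_square)
  then have "1/(4*(a+1)^2) \<le> 1/(2*a*(2*a+1))" using a by (intro divide_left_mono) auto
  then show ?thesis using onepe[of "1/(2*a)"] a e by simp
qed


lemma ofr_poly: "poly (map_poly complex_of_real p) (complex_of_real x) = complex_of_real (poly p x)"
  by (induction p) (auto simp: map_poly_pCons)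

lemma sum_bound_2:
  fixes a b R :: real and z :: complex
  assumes a: "a < 0" and b: "0 < b" and z: "cmod z = R"
  shows "cmod (z - of_real a) + cmod (z - of_real b) \<le> (b - a) + R^2 * (1/(2*(-a)) + 1/(2*b))"
  using dist_sq_a[OF a, of z] dist_sq_b[OF b, of z] z by (simp add: algebra_simps)

lemma sum_bound_1:
  fixes a b R :: real and z :: complex
  assumes a: "a < 0" and b: "0 < b" and z: "cmod z = R"
  shows "cmod (z - of_real a) + cmod (z - of_real b) \<le> (b - a) + 2*R + R^2/(b-a)"
proof (cases "b \<ge> -a")
  case True
  have "R^2/(2*b) \<le> R^2/(b-a)" using True a b by (intro divide_left_mono) auto
  then show ?thesis using dist_lin_a[of a z] dist_sq_b[OF b, of z] a z by simp
next
  case False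
  have "R^2/(2*(-a)) \<le> R^2/(b-a)" using False a b by (intro divide_left_mono) (auto simp: mult_neg_pos)
  then show ?thesis using dist_sq_a[OF a, of z] dist_lin_b[of b z] b z by simp
qed


theorem lemma3p13:
  fixes L :: nat and g :: "real poly" and a b :: real
  assumes "L \<ge> 1"
    and "degree g \<le> L"
    and "poly g 0 = 0"
    and "poly (pderiv g) 0 = 0"
    and "a < 0" and "0 < b"
    and "\<forall>x\<in>{a..b}. \<bar>poly g x\<bar> \<le> \<bar>x\<bar>"
  shows "(\<forall>x\<in>{a/4..b/4}. \<bar>x\<bar> \<le> 3 * (b - a) / (real L)^2 \<longrightarrow>
            \<bar>poly g x\<bar> \<le> 8 * (real L)^2 / (b - a) * x^2)
       \<and> (\<forall>x\<in>{a/4..b/4}. \<bar>x\<bar> \<le> sqrt \<bar>a * b\<bar> / (4 * real L) \<longrightarrow>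
            \<bar>poly g x\<bar> \<le> 4 * real L / sqrt \<bar>a * b\<bar> * x^2)"
proof -
  note L1 = assms(1) and degg = assms(2) and a = assms(5) and b = assms(6) and gb = assms(7)
  have ab: "a < b" using a b by simp
  obtain c h where g: "g = pCons c h" by (cases g)
  have c0: "c = 0" using assms(3) g by simp
  have "poly (pderiv g) 0 = poly h 0" using g c0 by (simp add: pderiv_pCons)
  then have h0: "poly h 0 = 0" using assms(4) by simp
  obtain d k where h: "h = pCons d k" by (cases h)
  have d0: "d = 0" using h0 h by simp
  have gx: "poly g x = x^2 * poly k x" for x using g c0 h d0 by (simp add: power2_eq_square)
  have gh: "poly g x = x * poly h x" for x using g c0 by simp
  have hx: "poly h x = x * poly k x" for x using h d0 by simp
  have bndh: "\<bar>poly h t\<bar> \<le> 1" if t: "t \<in> {a..b}" for t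
  proof (cases "t = 0")
    case True then show ?thesis using h0 by simp
  next
    case False
    have "\<bar>poly g t\<bar> \<le> \<bar>t\<bar>" using gb t by blast
    then have "\<bar>t\<bar> * \<bar>poly h t\<bar> \<le> \<bar>t\<bar> * 1" unfolding gh abs_mult by simp
    then show ?thesis using False by simp
  qed
  define N where "N = L - 1"
  have degh: "degree h \<le> N"
    using degg unfolding g c0 N_def by (auto simp: degree_pCons_eq_if split: if_splits)
  define hC where "hC = map_poly complex_of_real h"
  define kC where "kC = map_poly complex_of_real k"
  have hCk: "poly hC z = z * poly kC z" for z
    unfolding hC_def kC_def h d0 by (simp add: map_poly_pCons)
  have bndC: "\<forall>t\<in>{a..b}. cmod (poly hC (of_real t)) \<le> 1"
    using bndh unfolding hC_def ofr_poly norm_of_real by blast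
  have degC: "degree hC \<le> N" unfolding hC_def using degh by (subst degree_map_poly) auto
  have kreal: "cmod (poly kC (of_real x)) = \<bar>poly k x\<bar>" for x
    unfolding kC_def ofr_poly norm_of_real ..
  have key: "\<bar>poly k x\<bar> \<le> B / R"
    if R: "R > 0" and x: "\<bar>x\<bar> \<le> R" and sph: "\<And>z. cmod z = R \<Longrightarrow> cmod (poly hC z) \<le> B" for x R B
    using disc_bound[of R hC kC B "of_real x", OF R hCk sph] x kreal by simp
  show ?thesis
  proof (cases "k = 0")
    case True
    then have "poly g x = 0" for x using gx by simp
    then show ?thesis by simp
  next
    case False
    then have "h \<noteq> 0" using h by simp
    then have "degree h \<ge> 1" using h False by simp
    then have N1: "N \<ge> 1" using degh by simp
    define n where "n = real N"
    have n1: "n \<ge> 1" using N1 unfolding n_def by simp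
    have Ln: "real L = n + 1" unfolding n_def N_def using L1 by simp
    have Lpos: "real L > 0" using L1 by simp
    have part1: "\<bar>poly g x\<bar> \<le> 8 * (real L)^2 / (b - a) * x^2" if x: "x \<in> {a/4..b/4}" for x
    proof -
      define R where "R = (b-a) / (real L)^2"
      have Rpos: "R > 0" unfolding R_def using ab Lpos by simp
      show ?thesis
      proof (cases "\<bar>x\<bar> \<le> R")
        case True
        define s where "s = 1 + 2/n"
        have s1: "s \<ge> 1" unfolding s_def using n1 by simp
        have sph: "cmod (poly hC z) \<le> 8" if z: "cmod z = R" for z
        proof -
          have "cmod (z - of_real a) + cmod (z - of_real b) \<le> (b - a) + 2*R + R^2/(b-a)"
            by (rule sum_bound_1[OF a b z])
          also have "\<dots> = (b-a)/2 * (2 + 4/(n+1)^2 + 2/(n+1)^4)"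
            unfolding R_def Ln[symmetric] using ab Lpos
            by (simp add: field_simps power2_eq_square power4_eq_xxxx)
          also have "\<dots> \<le> (b-a)/2 * (s + 1/s)"
            unfolding s_def using ineq1[OF n1] ab by (intro mult_left_mono) auto
          finally have "cmod (poly hC z) \<le> s^N" by (rule ellipse_bound[OF ab degC bndC s1])
          also have "\<dots> \<le> exp 2" unfolding s_def n_def using pow_exp_bound[OF N1, of 2] by simp
          also have "\<dots> \<le> 8" by (rule exp2_le8)
          finally show ?thesis .
        qed
        have "\<bar>poly k x\<bar> \<le> 8 / R" by (rule key[OF Rpos True sph])
        then have "x^2 * \<bar>poly k x\<bar> \<le> x^2 * (8 / R)" by (intro mult_left_mono) auto
        then show ?thesis unfolding gx abs_mult R_def using ab by (simp add: field_simps)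
      next
        case False
        have xab: "x \<in> {a..b}" using x a b by auto
        have "\<bar>poly g x\<bar> \<le> \<bar>x\<bar>" using gb xab by blast
        also have "\<bar>x\<bar> \<le> 8 * (real L)^2 / (b - a) * x^2"
        proof -
          have "8 * (real L)^2 / (b - a) * \<bar>x\<bar> \<ge> 8 * (real L)^2 / (b - a) * R"
            using False ab by (intro mult_left_mono) auto
          also have "8 * (real L)^2 / (b - a) * R = 8" unfolding R_def using ab Lpos by simp
          finally have "1 \<le> 8 * (real L)^2 / (b - a) * \<bar>x\<bar>" by simp
          then have "\<bar>x\<bar> * 1 \<le> \<bar>x\<bar> * (8 * (real L)^2 / (b - a) * \<bar>x\<bar>)" by (intro mult_left_mono) auto
          then show ?thesis by (simp add: power2_eq_square abs_mult_self algebra_simps)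
        qed
        finally show ?thesis .
      qed
    qed
    have part2: "\<bar>poly g x\<bar> \<le> 4 * real L / sqrt \<bar>a * b\<bar> * x^2"
      if x: "\<bar>x\<bar> \<le> sqrt \<bar>a * b\<bar> / (4 * real L)" for x
    proof -
      have absab: "\<bar>a * b\<bar> = -a * b" using a b by (simp add: abs_mult)
      define q where "q = sqrt (-a * b)"
      have qpos: "q > 0" unfolding q_def using a b by (simp add: mult_neg_pos)
      have q2: "q^2 = -a * b" unfolding q_def using a b by (simp add: mult_neg_pos less_imp_le)
      have sq: "sqrt \<bar>a * b\<bar> = q" unfolding q_def absab ..
      define R where "R = q / (2 * real L)"
      have Rpos: "R > 0" unfolding R_def using qpos Lpos by simp
      have xR: "\<bar>x\<bar> \<le> R" using x qpos Lpos unfolding sq R_def by (simp add: field_simps)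
      define s where "s = 1 + 1/(2*n)"
      have s1: "s \<ge> 1" unfolding s_def using n1 by simp
      have sph: "cmod (poly hC z) \<le> 2" if z: "cmod z = R" for z
      proof -
        have "cmod (z - of_real a) + cmod (z - of_real b) \<le> (b - a) + R^2 * (1/(2*(-a)) + 1/(2*b))"
          by (rule sum_bound_2[OF a b z])
        also have "\<dots> = (b-a)/2 * (2 + 1/(4*(n+1)^2))"
          unfolding R_def Ln[symmetric] power_divide q2 using a b Lpos
          by (simp add: field_simps power2_eq_square)
        also have "\<dots> \<le> (b-a)/2 * (s + 1/s)"
          unfolding s_def using ineq2[OF n1] ab by (intro mult_left_mono) auto
        finally have "cmod (poly hC z) \<le> s^N" by (rule ellipse_bound[OF ab degC bndC s1])
        also have "\<dots> \<le> exp (1/2)" unfolding s_def n_def using pow_exp_bound[OF N1, of "1/2"] by simp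
        also have "\<dots> \<le> 2" by (rule exp_half_le2)
        finally show ?thesis .
      qed
      have "\<bar>poly k x\<bar> \<le> 2 / R" by (rule key[OF Rpos xR sph])
      then have "x^2 * \<bar>poly k x\<bar> \<le> x^2 * (2 / R)" by (intro mult_left_mono) auto
      then show ?thesis unfolding sq unfolding gx abs_mult using qpos Lpos unfolding R_def
        by (simp add: field_simps)
    qed
    show ?thesis using part1 part2 by blast
  qed
qed

end
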